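(* Let $\Omega\subset\mathbb R^n$ be a $C^{1,\operatorname{Dini}}$ domain with $0\in\partial\Omega$, described near $0$ in coordinates $(x',x_n)$ by $B_{R_0}\cap\Omega=\{x_n<\varphi(x')\}$, $B_{R_0}\cap\partial\Omega=\{x_n=\varphi(x')\}$, with $\varphi(0)=0$ and $D'\varphi(0)=0$, so that the outer unit normal satisfies $\nu(0)=e_n=(0,\dots,0,1)$. Assume $R_0<1$, $\sup_{|x'|\le R_0}\sqrt{1+|D'\varphi(x')|^2}\le \tfrac32$, and let $\Lambda:(0,R_0]\to(0,\infty)$ be a non-decreasing function such that $$\sup_{x_1,x_2\in\partial\Omega\cap B_r}|\nu(x_2)-\nu(x_1)|\le\Lambda(r)\quad\text{for every }r\in(0,R_0],$$ and $\Lambda(R_0)<\tfrac1{1000}$. For $0<r\le R_0$ let $a=4\Lambda(r)r$ and $y_0=-a\nu(0)=(0,-a)$. Then for $0<r\le R_0$ the set $\Omega\cap B_{r-a}(y_0)$ is star-shaped with respect to $y_0$, and moreover for every $x\in\partial\Omega\cap B_r$, $$\frac{r\Lambda(r)}{2}\le\langle x-y_0,\nu(x)\rangle\le 10\, r\Lambda(r).$$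
   Context: $B_r$ is the open Euclidean ball of radius $r$ centered at $0$, $B_r(y)$ the one centered at $y$. A $C^{1,\operatorname{Dini}}$ domain is a connected bounded open set whose boundary is locally the graph $x_n=\varphi(x')$ of a function with $|D'\varphi(x_1')-D'\varphi(x_2')|\le\psi(|x_1'-x_2'|)$, $\int_0^2\psi(r)/r\,dr<\infty$, with $\Omega$ lying locally below the graph. The outer unit normal at $(x',\varphi(x'))$ is $\nu=\big(-D'\varphi,1\big)/\sqrt{1+|D'\varphi|^2}$. *)

theory Defs
  imports "HOL-Analysis.Analysis"
begin

text \<open>Points of R^n are modelled as pairs (x', x_n) :: 'a \<times> real, with 'a a Euclidean
  space of dimension n-1. The norm and inner product on the product type are the Euclidean ones.\<close>

definition dini_grad_on :: "'a::euclidean_space set \<Rightarrow> ('a \<Rightarrow> 'a) \<Rightarrow> bool" where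
  "dini_grad_on S D \<longleftrightarrow> (\<exists>\<psi>::real \<Rightarrow> real.
      (\<forall>x1\<in>S. \<forall>x2\<in>S. norm (D x1 - D x2) \<le> \<psi> (norm (x1 - x2))) \<and>
      (\<lambda>r. \<psi> r / r) integrable_on {0..2})"

definition C1_Dini_domain :: "('a::euclidean_space \<times> real) set \<Rightarrow> bool" where
  "C1_Dini_domain \<Omega> \<longleftrightarrow> open \<Omega> \<and> connected \<Omega> \<and> bounded \<Omega> \<and> \<Omega> \<noteq> {} \<and>
     (\<forall>p\<in>frontier \<Omega>. \<exists>T R (\<phi>::'a \<Rightarrow> real) D\<phi>.
        orthogonal_transformation T \<and> R > 0 \<and>
        (\<forall>x'\<in>ball 0 R. (\<phi> has_derivative (\<lambda>h. inner (D\<phi> x') h)) (at x')) \<and>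
        dini_grad_on (ball 0 R) D\<phi> \<and>
        (\<forall>y. norm y < R \<longrightarrow>
            (p + T y \<in> \<Omega> \<longleftrightarrow> snd y < \<phi> (fst y)) \<and>
            (p + T y \<in> frontier \<Omega> \<longleftrightarrow> snd y = \<phi> (fst y))))"

definition graph_normal :: "('a::euclidean_space \<Rightarrow> 'a) \<Rightarrow> 'a \<times> real \<Rightarrow> 'a \<times> real" where
  "graph_normal D\<phi> x = (1 / sqrt (1 + (norm (D\<phi> (fst x)))\<^sup>2)) *\<^sub>R (- D\<phi> (fst x), 1)"

definition star_shaped_wrt :: "'b::real_vector \<Rightarrow> 'b set \<Rightarrow> bool" where
  "star_shaped_wrt y S \<longleftrightarrow> y \<in> S \<and> (\<forall>x\<in>S. closed_segment y x \<subseteq> S)"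

end

theory Submission
  imports Defs
begin

lemma ray_deriv:
  fixes \<phi> :: "'a::euclidean_space \<Rightarrow> real"
  assumes "(\<phi> has_derivative (\<lambda>h. inner (D (t *\<^sub>R v)) h)) (at (t *\<^sub>R v))"
  shows "((\<lambda>s. \<phi> (s *\<^sub>R v)) has_real_derivative inner (D (t *\<^sub>R v)) v) (at t)"
proof -
  have 1: "((\<lambda>s. s *\<^sub>R v) has_derivative (\<lambda>h. h *\<^sub>R v)) (at t)"
    by (auto intro!: derivative_eq_intros)
  have "((\<phi> \<circ> (\<lambda>s. s *\<^sub>R v)) has_derivative ((\<lambda>h. inner (D (t *\<^sub>R v)) h) \<circ> (\<lambda>h. h *\<^sub>R v))) (at t)"
    by (rule diff_chain_at[OF 1 assms])
  moreover have "((\<lambda>h. inner (D (t *\<^sub>R v)) h) \<circ> (\<lambda>h. h *\<^sub>R v)) = (\<lambda>h. inner (D (t *\<^sub>R v)) v * h)"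
    by (auto simp: fun_eq_iff)
  ultimately show ?thesis by (simp add: has_field_derivative_def o_def)
qed

lemma normal_diff:
  fixes D :: "'a::euclidean_space"
  assumes "norm (graph_normal D\<phi> x - graph_normal D\<phi> (0,0)) \<le> L" "D\<phi> 0 = 0" "D\<phi> (fst x) = D"
  shows "norm D / sqrt (1 + (norm D)\<^sup>2) \<le> L" "\<bar>1 / sqrt (1 + (norm D)\<^sup>2) - 1\<bar> \<le> L"
proof -
  let ?s = "sqrt (1 + (norm D)\<^sup>2)"
  have e: "graph_normal D\<phi> x - graph_normal D\<phi> (0,0) = (- ((1/?s) *\<^sub>R D), 1/?s - 1)"
    using assms(2,3) by (simp add: graph_normal_def)
  have "norm (- ((1/?s) *\<^sub>R D)) \<le> L" using assms(1) e norm_fst_le order_trans by metis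
  then show "norm D / ?s \<le> L" by simp
  have "norm (1/?s - 1) \<le> L" using assms(1) e norm_snd_le order_trans by metis
  then show "\<bar>1 / ?s - 1\<bar> \<le> L" by simp
qed

theorem lemma3p2:
  fixes \<Omega> :: "('a::euclidean_space \<times> real) set"
    and \<phi> :: "'a \<Rightarrow> real" and D\<phi> :: "'a \<Rightarrow> 'a"
    and R0 :: real and \<Lambda> :: "real \<Rightarrow> real"
  assumes dom: "C1_Dini_domain \<Omega>"
    and zero_bd: "(0, 0) \<in> frontier \<Omega>"
    and R0: "0 < R0" "R0 < 1"
    and deriv: "\<forall>x'\<in>cball 0 R0. (\<phi> has_derivative (\<lambda>h. inner (D\<phi> x') h)) (at x')"
    and dini: "dini_grad_on (cball 0 R0) D\<phi>"
    and graph: "\<forall>x. norm x < R0 \<longrightarrow>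
                  (x \<in> \<Omega> \<longleftrightarrow> snd x < \<phi> (fst x)) \<and>
                  (x \<in> frontier \<Omega> \<longleftrightarrow> snd x = \<phi> (fst x))"
    and phi0: "\<phi> 0 = 0" and Dphi0: "D\<phi> 0 = 0"
    and slope: "\<forall>x'\<in>cball 0 R0. sqrt (1 + (norm (D\<phi> x'))\<^sup>2) \<le> 3/2"
    and Lpos: "\<forall>r\<in>{0<..R0}. \<Lambda> r > 0"
    and Lmono: "mono_on {0<..R0} \<Lambda>"
    and Losc: "\<forall>r\<in>{0<..R0}. \<forall>x1\<in>frontier \<Omega> \<inter> ball 0 r. \<forall>x2\<in>frontier \<Omega> \<inter> ball 0 r.
                  norm (graph_normal D\<phi> x2 - graph_normal D\<phi> x1) \<le> \<Lambda> r"
    and Lsmall: "\<Lambda> R0 < 1/1000"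
  shows "\<forall>r\<in>{0<..R0}.
           (let a = 4 * \<Lambda> r * r; y0 = (0, - a) :: 'a \<times> real in
              star_shaped_wrt y0 (\<Omega> \<inter> ball y0 (r - a)) \<and>
              (\<forall>x\<in>frontier \<Omega> \<inter> ball 0 r.
                 r * \<Lambda> r / 2 \<le> inner (x - y0) (graph_normal D\<phi> x) \<and>
                 inner (x - y0) (graph_normal D\<phi> x) \<le> 10 * r * \<Lambda> r))"
proof
  fix r assume r: "r \<in> {0<..R0}"
  define L where "L = \<Lambda> r"
  define a where "a = 4 * L * r"
  define y0 where "y0 = ((0, - a) :: 'a \<times> real)"
  have r0: "0 < r" "r \<le> R0" using r by auto
  have L0: "0 < L" using Lpos r L_def by auto
  have L1: "L < 1/1000" using mono_onD[OF Lmono r, of R0] r0 R0 Lsmall L_def by auto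
  have a0: "0 < a" "a < r" using L0 L1 r0 unfolding a_def by auto
  have n0: "\<And>x. fst x = 0 \<Longrightarrow> graph_normal D\<phi> x = (0,1)" by (simp add: graph_normal_def Dphi0)
  have zero_in: "(0,0) \<in> frontier \<Omega> \<inter> ball 0 r" using zero_bd r0 by simp
  have bdD: "\<And>q. norm (q, \<phi> q) < r \<Longrightarrow> norm (D\<phi> q) \<le> 3/2 * L \<and> 1 - L \<le> 1 / sqrt (1 + (norm (D\<phi> q))\<^sup>2)"
  proof -
    fix q assume q: "norm (q, \<phi> q) < r"
    have qR: "norm q \<le> R0" using norm_fst_le[of q "\<phi> q"] q r0 by linarith
    have "(q, \<phi> q) \<in> frontier \<Omega>" using graph q r0 by auto
    then have "norm (graph_normal D\<phi> (q, \<phi> q) - graph_normal D\<phi> (0,0)) \<le> L"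
      using Losc r zero_in q L_def by auto
    from normal_diff[OF this Dphi0] have h1: "norm (D\<phi> q) / sqrt (1 + (norm (D\<phi> q))\<^sup>2) \<le> L"
      and h2: "\<bar>1 / sqrt (1 + (norm (D\<phi> q))\<^sup>2) - 1\<bar> \<le> L" by auto
    have s: "sqrt (1 + (norm (D\<phi> q))\<^sup>2) \<le> 3/2" using slope qR by auto
    have sp: "0 < sqrt (1 + (norm (D\<phi> q))\<^sup>2)" by (simp add: add_pos_nonneg)
    have "norm (D\<phi> q) \<le> L * sqrt (1 + (norm (D\<phi> q))\<^sup>2)" using h1 sp by (simp add: divide_le_eq mult.commute)
    also have "\<dots> \<le> L * (3/2)" using s L0 by (intro mult_left_mono) auto
    finally show "norm (D\<phi> q) \<le> 3/2 * L \<and> 1 - L \<le> 1 / sqrt (1 + (norm (D\<phi> q))\<^sup>2)" using h2 by auto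
  qed
  have slopeL: "\<And>q. norm q \<le> R0 \<Longrightarrow> norm (D\<phi> q) \<le> 9/8"
  proof -
    fix q :: 'a assume "norm q \<le> R0"
    then have "sqrt (1 + (norm (D\<phi> q))\<^sup>2) \<le> 3/2" using slope by auto
    then have "1 + (norm (D\<phi> q))\<^sup>2 \<le> (3/2)^2" by (rule sqrt_le_D)
    then have "(norm (D\<phi> q))\<^sup>2 \<le> (9/8)^2" by (simp add: power2_eq_square)
    then show "norm (D\<phi> q) \<le> 9/8" by (rule power2_le_imp_le) simp
  qed
  have rayd: "\<And>v t. norm v \<le> R0 \<Longrightarrow> t \<in> {0..1} \<Longrightarrow>
      ((\<lambda>s. \<phi> (s *\<^sub>R v)) has_real_derivative inner (D\<phi> (t *\<^sub>R v)) v) (at t)"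
  proof -
    fix v :: 'a and t :: real assume v: "norm v \<le> R0" and t: "t \<in> {0..1}"
    have "norm (t *\<^sub>R v) \<le> norm v" using t by (auto simp: mult_left_le_one_le)
    then show "((\<lambda>s. \<phi> (s *\<^sub>R v)) has_real_derivative inner (D\<phi> (t *\<^sub>R v)) v) (at t)"
      using deriv v by (intro ray_deriv) auto
  qed
  have raycont: "\<And>v. norm v \<le> R0 \<Longrightarrow> continuous_on {0..1} (\<lambda>s. \<phi> (s *\<^sub>R v))"
    using rayd by (meson DERIV_isCont continuous_at_imp_continuous_on)
  have path: "\<And>v s. norm (v, \<phi> v) < r \<Longrightarrow> s \<in> {0..1} \<Longrightarrow> norm (s *\<^sub>R v, \<phi> (s *\<^sub>R v)) < r"
  proof (rule ccontr)
    fix v :: 'a and s :: real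
    assume v: "norm (v, \<phi> v) < r" and s: "s \<in> {0..1}" and ns: "\<not> norm (s *\<^sub>R v, \<phi> (s *\<^sub>R v)) < r"
    have vR: "norm v \<le> R0" "norm v < r" using norm_fst_le[of v "\<phi> v"] v r0 by linarith+
    define g where "g = (\<lambda>s. norm (s *\<^sub>R v, \<phi> (s *\<^sub>R v)))"
    have gc: "continuous_on {0..1} g" unfolding g_def using raycont[OF vR(1)]
      by (intro continuous_intros) auto
    define C where "C = {0..1} \<inter> g -` {r..}"
    have "closed C" unfolding C_def by (rule continuous_closed_preimage[OF gc]) auto
    moreover have "bounded C" unfolding C_def by (rule bounded_subset[OF compact_imp_bounded[OF compact_Icc]]) auto
    ultimately have cC: "compact C" by (simp add: compact_eq_bounded_closed)
    have "s \<in> C" using s ns by (auto simp: C_def g_def)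
    then obtain s1 where s1: "s1 \<in> C" "\<forall>t\<in>C. t \<le> s1" using compact_attains_sup[OF cC] by blast
    have g1: "g 1 < r" using v by (simp add: g_def)
    have g0: "g 0 = 0" by (simp add: g_def phi0)
    have s1r: "0 < s1" "s1 < 1" "r \<le> g s1"
    proof -
      have "s1 \<in> {0..1}" "r \<le> g s1" using s1 by (auto simp: C_def)
      moreover have "s1 \<noteq> 0" "s1 \<noteq> 1" using g0 g1 r0 calculation by auto
      ultimately show "0 < s1" "s1 < 1" "r \<le> g s1" by auto
    qed
    have after: "\<And>t. s1 < t \<Longrightarrow> t \<le> 1 \<Longrightarrow> norm (D\<phi> (t *\<^sub>R v)) \<le> 3/2 * L"
    proof -
      fix t assume t: "s1 < t" "t \<le> 1"
      then have "t \<notin> C" using s1 by force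
      then have "g t < r" using t s1r by (auto simp: C_def)
      then show "norm (D\<phi> (t *\<^sub>R v)) \<le> 3/2 * L" using bdD unfolding g_def by blast
    qed
    obtain z where z: "s1 < z" "z < 1" "\<phi> (1 *\<^sub>R v) - \<phi> (s1 *\<^sub>R v) = (1 - s1) * inner (D\<phi> (z *\<^sub>R v)) v"
      using MVT2[of s1 1 "\<lambda>s. \<phi> (s *\<^sub>R v)" "\<lambda>t. inner (D\<phi> (t *\<^sub>R v)) v"] rayd[OF vR(1)] s1r
      by auto
    obtain w where w: "0 < w" "w < s1" "\<phi> (s1 *\<^sub>R v) - \<phi> (0 *\<^sub>R v) = (s1 - 0) * inner (D\<phi> (w *\<^sub>R v)) v"
      using MVT2[of 0 s1 "\<lambda>s. \<phi> (s *\<^sub>R v)" "\<lambda>t. inner (D\<phi> (t *\<^sub>R v)) v"] rayd[OF vR(1)] s1r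
      by auto
    define u where "u = norm v"
    define h where "h = \<phi> (s1 *\<^sub>R v)"
    define p where "p = \<phi> v"
    define \<delta> where "\<delta> = 3/2 * L"
    define d where "d = (1 - s1) * \<delta> * u"
    have u0: "0 \<le> u" by (simp add: u_def)
    have "\<bar>inner (D\<phi> (z *\<^sub>R v)) v\<bar> \<le> norm (D\<phi> (z *\<^sub>R v)) * norm v" by (rule Cauchy_Schwarz_ineq2)
    also have "\<dots> \<le> \<delta> * u" unfolding \<delta>_def u_def using after[of z] z by (intro mult_right_mono) auto
    finally have "\<bar>(1 - s1) * inner (D\<phi> (z *\<^sub>R v)) v\<bar> \<le> (1 - s1) * (\<delta> * u)"
      using s1r by (simp add: abs_mult mult_left_mono)
    then have e1: "\<bar>p - h\<bar> \<le> d" using z by (simp add: p_def h_def d_def mult.assoc)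
    have wR: "norm (w *\<^sub>R v) \<le> R0"
    proof -
      have "w * norm v \<le> 1 * norm v" using w s1r by (intro mult_right_mono) auto
      then show ?thesis using w vR by simp
    qed
    have "\<bar>inner (D\<phi> (w *\<^sub>R v)) v\<bar> \<le> norm (D\<phi> (w *\<^sub>R v)) * norm v" by (rule Cauchy_Schwarz_ineq2)
    also have "\<dots> \<le> 9/8 * u" unfolding u_def using slopeL[OF wR] by (intro mult_right_mono) auto
    finally have "\<bar>s1 * inner (D\<phi> (w *\<^sub>R v)) v\<bar> \<le> s1 * (9/8 * u)"
      using s1r by (simp add: abs_mult mult_left_mono)
    then have e2: "\<bar>h\<bar> \<le> s1 * (9/8 * u)" using w by (simp add: h_def phi0)
    have dl: "0 \<le> \<delta>" "\<delta> \<le> 1/500" using L0 L1 by (auto simp: \<delta>_def)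
    have A: "p^2 - h^2 \<ge> - d * (d + 2*\<bar>h\<bar>)"
    proof -
      have "\<bar>p + h\<bar> \<le> d + 2*\<bar>h\<bar>" using e1 by linarith
      then have "\<bar>(p - h) * (p + h)\<bar> \<le> d * (d + 2*\<bar>h\<bar>)" unfolding abs_mult
        using e1 by (intro mult_mono) auto
      moreover have "p^2 - h^2 = (p - h) * (p + h)" by (simp add: power2_eq_square algebra_simps)
      ultimately show ?thesis by linarith
    qed
    have B: "d * (d + 2*\<bar>h\<bar>) \<le> ((1 - s1) * u) * (\<delta> * u * (\<delta> + 9/4))"
    proof -
      have d0: "0 \<le> d" using s1r dl u0 by (simp add: d_def)
      have "d + 2*\<bar>h\<bar> \<le> u * (\<delta> + 9/4)"
      proof -
        have "d \<le> \<delta> * u" unfolding d_def using s1r dl u0 by (simp add: mult_left_le_one_le mult.assoc)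
        moreover have "s1 * (9/8*u) \<le> 9/8*u" using s1r u0 by (intro mult_left_le_one_le) auto
        moreover have "2*\<bar>h\<bar> \<le> 9/4 * u" using e2 calculation(2) by linarith
        ultimately show ?thesis by (simp add: algebra_simps)
      qed
      then have "d * (d + 2*\<bar>h\<bar>) \<le> d * (u * (\<delta> + 9/4))" using d0 by (rule mult_left_mono)
      then show ?thesis by (simp add: d_def algebra_simps)
    qed
    have "\<delta> * (\<delta> + 9/4) \<le> (1/500) * (1/500 + 9/4)" using dl by (intro mult_mono) auto
    then have Cc: "\<delta> * (\<delta> + 9/4) \<le> 1" by simp
    have key: "(s1 * u)^2 + h^2 \<le> u^2 + p^2"
    proof -
      have "((1 - s1) * u) * (\<delta> * u * (\<delta> + 9/4)) = ((1 - s1) * u * u) * (\<delta> * (\<delta> + 9/4))"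
        by (simp add: algebra_simps)
      also have "\<dots> \<le> ((1 - s1) * u * u) * 1" using Cc s1r u0 by (intro mult_left_mono) auto
      also have "\<dots> \<le> (1 - s1) * (1 + s1) * u * u" using s1r u0
        by (simp add: mult_right_mono mult_left_mono)
      finally have "d * (d + 2*\<bar>h\<bar>) \<le> (1 - s1) * (1 + s1) * u * u" using B by linarith
      then show ?thesis using A by (simp add: power2_eq_square algebra_simps)
    qed
    have "g s1 = sqrt ((s1 * u)^2 + h^2)" using s1r by (simp add: g_def norm_Pair u_def h_def)
    also have "\<dots> \<le> sqrt (u^2 + p^2)" using key by simp
    also have "\<dots> = g 1" by (simp add: g_def norm_Pair u_def p_def)
    finally show False using g1 s1r by linarith
  qed
  have phib: "\<And>v. norm (v, \<phi> v) < r \<Longrightarrow> \<bar>\<phi> v\<bar> \<le> 3/2 * L * norm v"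
  proof -
    fix v :: 'a assume v: "norm (v, \<phi> v) < r"
    have vR: "norm v \<le> R0" using norm_fst_le[of v "\<phi> v"] v r0 by linarith
    obtain z where z: "0 < z" "z < 1" "\<phi> (1 *\<^sub>R v) - \<phi> (0 *\<^sub>R v) = (1 - 0) * inner (D\<phi> (z *\<^sub>R v)) v"
      using MVT2[of 0 1 "\<lambda>s. \<phi> (s *\<^sub>R v)" "\<lambda>t. inner (D\<phi> (t *\<^sub>R v)) v"] rayd[OF vR] by auto
    have "norm (D\<phi> (z *\<^sub>R v)) \<le> 3/2 * L" using bdD path[OF v, of z] z by auto
    have "\<bar>inner (D\<phi> (z *\<^sub>R v)) v\<bar> \<le> norm (D\<phi> (z *\<^sub>R v)) * norm v" by (rule Cauchy_Schwarz_ineq2)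
    also have "\<dots> \<le> 3/2 * L * norm v" using \<open>norm (D\<phi> (z *\<^sub>R v)) \<le> 3/2 * L\<close> by (intro mult_right_mono) auto
    finally show "\<bar>\<phi> v\<bar> \<le> 3/2 * L * norm v" using z by (simp add: phi0)
  qed
  have ineq: "\<forall>x\<in>frontier \<Omega> \<inter> ball 0 r. r * L / 2 \<le> inner (x - y0) (graph_normal D\<phi> x)
       \<and> inner (x - y0) (graph_normal D\<phi> x) \<le> 10 * r * L"
  proof
    fix x assume x: "x \<in> frontier \<Omega> \<inter> ball 0 r"
    obtain v xn where xv: "x = (v, xn)" by (cases x)
    have xn: "xn = \<phi> v" using graph x r0 xv by auto
    have nx: "norm (v, \<phi> v) < r" using x xv xn by simp
    have pb: "\<bar>\<phi> v\<bar> \<le> 3/2 * L * norm v" by (rule phib[OF nx])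
    have nv: "norm v < r" using norm_fst_le[of v "\<phi> v"] nx by linarith
    have pb2: "\<bar>\<phi> v\<bar> \<le> 3/2 * L * r" proof -
      have "3/2 * L * norm v \<le> 3/2 * L * r" using nv L0 by (intro mult_left_mono) auto
      then show ?thesis using pb by linarith
    qed
    define N where "N = graph_normal D\<phi> x"
    have "norm (N - graph_normal D\<phi> (0,0)) \<le> L" using Losc r zero_in x L_def N_def by auto
    then have N0: "norm (N - (0,1)) \<le> L" using n0[of "(0,0)"] by simp
    have sN: "snd N = 1 / sqrt (1 + (norm (D\<phi> v))\<^sup>2)" by (simp add: N_def graph_normal_def xv)
    have sN1: "1 - L \<le> snd N" using bdD[OF nx] sN by simp
    have "1 \<le> sqrt (1 + (norm (D\<phi> v))\<^sup>2)" by simp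
    moreover have "0 < 1 + (norm (D\<phi> v))\<^sup>2" by (simp add: add_pos_nonneg)
    ultimately have sN2: "snd N \<le> 1" unfolding sN by (simp add: divide_le_eq_1)
    have dec: "inner (x - y0) N = inner x (N - (0,1)) + xn + a * snd N"
      by (cases N) (simp add: xv y0_def algebra_simps)
    have "\<bar>inner x (N - (0,1))\<bar> \<le> norm x * norm (N - (0,1))" by (rule Cauchy_Schwarz_ineq2)
    also have "\<dots> \<le> r * L" using x N0 r0 by (intro mult_mono) auto
    finally have i1: "\<bar>inner x (N - (0,1))\<bar> \<le> r * L" .
    have i2: "a * (1 - L) \<le> a * snd N" "a * snd N \<le> a" using sN1 sN2 a0
      by (auto intro: mult_left_mono simp: mult_left_le_one_le)
    have rLL: "r * L * L \<le> r * L * (1/1000)" using L0 L1 r0 by (intro mult_left_mono) auto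
    have ea: "a * (1 - L) = 4 * (r * L) - 4 * (r * L * L)" "a = 4 * (r * L)" unfolding a_def by (simp_all add: algebra_simps)
    have ep: "3/2 * L * r = 3/2 * (r * L)" "10 * r * L = 10 * (r * L)" by simp_all
    have "r * L / 2 \<le> inner (x - y0) N"
      using dec i1 i2 pb2 rLL xn ea ep by linarith
    moreover have "inner (x - y0) N \<le> 10 * r * L"
      using dec i1 i2 pb2 rLL xn ea ep by linarith
    ultimately show "r * L / 2 \<le> inner (x - y0) (graph_normal D\<phi> x)
       \<and> inner (x - y0) (graph_normal D\<phi> x) \<le> 10 * r * L" by (simp add: N_def)
  qed
  have star: "star_shaped_wrt y0 (\<Omega> \<inter> ball y0 (r - a))"
    unfolding star_shaped_wrt_def
  proof (intro conjI ballI)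
    have ny0: "norm y0 = a" using a0 by (simp add: y0_def)
    have "norm y0 < R0" using ny0 a0 r0 by simp
    then have "y0 \<in> \<Omega>" using graph a0 phi0 by (simp add: y0_def)
    then show y0in: "y0 \<in> \<Omega> \<inter> ball y0 (r - a)" using a0 by simp
    fix x assume x: "x \<in> \<Omega> \<inter> ball y0 (r - a)"
    obtain v xn where xv: "x = (v, xn)" by (cases x)
    define P where "P = (\<lambda>t. (1 - t) *\<^sub>R y0 + t *\<^sub>R x)"
    have Pseg: "\<And>t. t \<in> {0..1} \<Longrightarrow> P t \<in> ball y0 (r - a)"
    proof -
      fix t :: real assume t: "t \<in> {0..1}"
      have "P t \<in> closed_segment y0 x" using t by (auto simp: P_def in_segment)
      then show "P t \<in> ball y0 (r - a)"
        using closed_segment_subset[of y0 "ball y0 (r-a)" x] x y0in by auto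
    qed
    have Pn: "\<And>t. t \<in> {0..1} \<Longrightarrow> norm (P t) < r"
    proof -
      fix t :: real assume t: "t \<in> {0..1}"
      have "dist y0 (P t) < r - a" using Pseg[OF t] by simp
      then have "norm (P t - y0) < r - a" by (simp add: dist_norm norm_minus_commute)
      then show "norm (P t) < r" using norm_triangle_ineq[of "P t - y0" y0] ny0 by simp
    qed
    have Pe: "\<And>t. P t = (t *\<^sub>R v, (1 - t) * (- a) + t * xn)" by (simp add: P_def y0_def xv)
    define H where "H = (\<lambda>t. \<phi> (t *\<^sub>R v) - ((1 - t) * (- a) + t * xn))"
    have PO: "\<And>t. t \<in> {0..1} \<Longrightarrow> (P t \<in> \<Omega> \<longleftrightarrow> 0 < H t) \<and> (P t \<in> frontier \<Omega> \<longleftrightarrow> H t = 0)"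
    proof -
      fix t :: real assume t: "t \<in> {0..1}"
      have "norm (P t) < R0" using Pn[OF t] r0 by simp
      then show "(P t \<in> \<Omega> \<longleftrightarrow> 0 < H t) \<and> (P t \<in> frontier \<Omega> \<longleftrightarrow> H t = 0)"
        using graph by (auto simp: H_def Pe)
    qed
    have vR: "norm v \<le> R0"
    proof -
      have "P 1 = x" by (simp add: P_def)
      then have "norm x < r" using Pn[of 1] by simp
      then show ?thesis using norm_fst_le[of v xn] xv r0 by simp
    qed
    have Hd: "\<And>t. t \<in> {0..1} \<Longrightarrow> (H has_real_derivative (inner (D\<phi> (t *\<^sub>R v)) v - (xn + a))) (at t)"
    proof -
      fix t :: real assume t: "t \<in> {0..1}"
      have "((\<lambda>t. (1 - t) * (- a) + t * xn) has_real_derivative (xn + a)) (at t)"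
        by (auto intro!: derivative_eq_intros)
      from DERIV_diff[OF rayd[OF vR t] this]
      show "(H has_real_derivative (inner (D\<phi> (t *\<^sub>R v)) v - (xn + a))) (at t)"
        unfolding H_def by simp
    qed
    have Hc: "continuous_on {0..1} H" using Hd by (meson DERIV_isCont continuous_at_imp_continuous_on)
    have H0: "H 0 = a" by (simp add: H_def phi0)
    have H1: "0 < H 1" using PO[of 1] x by (simp add: P_def)
    have Hpos: "\<forall>t\<in>{0..1}. 0 < H t"
    proof (rule ccontr)
      assume "\<not> (\<forall>t\<in>{0..1}. 0 < H t)"
      then obtain t where t: "t \<in> {0..1}" "H t \<le> 0" by force
      have "continuous_on {t..1} H" by (rule continuous_on_subset[OF Hc]) (use t in auto)
      then obtain t0 where t0: "t \<le> t0" "t0 \<le> 1" "H t0 = 0" using IVT'[of H t 0 1] t H1 by auto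
      define Z where "Z = {0..1} \<inter> H -` {0}"
      have "closed Z" unfolding Z_def by (rule continuous_closed_preimage[OF Hc]) auto
      moreover have "bounded Z" unfolding Z_def by (rule bounded_subset[OF compact_imp_bounded[OF compact_Icc]]) auto
      ultimately have cZ: "compact Z" by (simp add: compact_eq_bounded_closed)
      have "t0 \<in> Z" using t t0 by (auto simp: Z_def)
      then obtain t1 where t1: "t1 \<in> Z" "\<forall>s\<in>Z. s \<le> t1" using compact_attains_sup[OF cZ] by blast
      have t1r: "0 < t1" "t1 < 1" "H t1 = 0"
      proof -
        have "t1 \<in> {0..1}" "H t1 = 0" using t1 by (auto simp: Z_def)
        moreover have "t1 \<noteq> 0" "t1 \<noteq> 1" using H0 H1 a0 calculation by auto
        ultimately show "0 < t1" "t1 < 1" "H t1 = 0" by auto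
      qed
      have t1i: "t1 \<in> {0..1}" using t1r by auto
      have "P t1 \<in> frontier \<Omega> \<inter> ball 0 r" using PO[OF t1i] Pn[OF t1i] t1r by simp
      then have iq: "r * L / 2 \<le> inner (P t1 - y0) (graph_normal D\<phi> (P t1))" using ineq by blast
      define D where "D = D\<phi> (t1 *\<^sub>R v)"
      define s where "s = sqrt (1 + (norm D)\<^sup>2)"
      have sp: "0 < s" unfolding s_def by (simp add: add_pos_nonneg)
      have "inner (P t1 - y0) (graph_normal D\<phi> (P t1)) = (t1 / s) * (- (inner D v - (xn + a)))"
        by (simp add: Pe y0_def graph_normal_def D_def s_def inner_commute algebra_simps)
          (simp add: add_divide_distrib[symmetric])
      moreover have "0 < r * L / 2" using r0 L0 by simp
      ultimately have pr: "0 < (t1 / s) * (- (inner D v - (xn + a)))" using iq by linarith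
      have "0 < t1 / s" using t1r sp by simp
      from zero_less_mult_pos[OF pr this] have neg: "inner D v - (xn + a) < 0" by linarith
      obtain d where d: "d > 0" "\<forall>h>0. h < d \<longrightarrow> H t1 > H (t1 + h)"
        using DERIV_neg_dec_right[OF Hd[OF t1i] neg[unfolded D_def]] by blast
      define t2 where "t2 = t1 + min (d/2) ((1 - t1)/2)"
      define h where "h = min (d/2) ((1 - t1)/2)"
      have hh: "0 < h" "h < d" "h \<le> (1 - t1)/2" using d t1r by (auto simp: h_def min_def)
      have t2: "t1 < t2" "t2 \<le> 1" "H t2 < 0" using d hh t1r unfolding t2_def h_def[symmetric] by auto
      have "continuous_on {t2..1} H" by (rule continuous_on_subset[OF Hc]) (use t2 t1r in auto)
      then obtain t3 where t3: "t2 \<le> t3" "t3 \<le> 1" "H t3 = 0" using IVT'[of H t2 0 1] t2 H1 by auto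
      have "t3 \<in> Z" using t3 t2 t1r by (auto simp: Z_def)
      then show False using t1 t3 t2 by force
    qed
    show "closed_segment y0 x \<subseteq> \<Omega> \<inter> ball y0 (r - a)"
    proof
      fix z assume "z \<in> closed_segment y0 x"
      then obtain t where t: "0 \<le> t" "t \<le> 1" "z = P t" by (auto simp: in_segment P_def)
      then show "z \<in> \<Omega> \<inter> ball y0 (r - a)" using PO Pseg Hpos by auto
    qed
  qed
  show "let a = 4 * \<Lambda> r * r; y0 = (0, - a) :: 'a \<times> real in
              star_shaped_wrt y0 (\<Omega> \<inter> ball y0 (r - a)) \<and>
              (\<forall>x\<in>frontier \<Omega> \<inter> ball 0 r.
                 r * \<Lambda> r / 2 \<le> inner (x - y0) (graph_normal D\<phi> x) \<and>
                 inner (x - y0) (graph_normal D\<phi> x) \<le> 10 * r * \<Lambda> r)"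
    using star ineq unfolding Let_def y0_def a_def L_def by simp
qed

end
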